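(* Let $I$ be a conditional indicator w.r.t. $\mathcal{H}$ which is increasing and regular, and define for $X\in\mathbb{L}^0(\overline{\mathbb{R}},\mathcal{F})$ $$I^L(X)=\operatorname{ess\,sup}_{\mathcal{H}}\{I(Y):Y\in\mathbb{D}_I,\ Y\le X\},\qquad I^U(X)=\operatorname{ess\,inf}_{\mathcal{H}}\{I(Y):Y\in\mathbb{D}_I,\ Y\ge X\}.$$ Then $I^L$ and $I^U$ are regular.
   Context: Let $(\Omega,\mathcal{F},\mathbb{P})$ be a probability space with $\mathcal{F}$ complete, and $\mathcal{H}\subseteq\mathcal{F}$ a complete sub-$\sigma$-algebra. $\overline{\mathbb{R}}=\mathbb{R}\cup\{\pm\infty\}$ with conventions $r\pm\infty=\pm\infty$, $\infty-\infty=0$, $\infty+\infty=\infty$, $0\times(\pm\infty)=0$; $\mathbb{L}^0(G,\mathcal{G})$ is the set of $\mathcal{G}$-measurable random variables a.s. valued in $G$. For a family $\Gamma$ of random variables, $\operatorname{ess\,sup}_{\mathcal{H}}\Gamma$ is the smallest (a.s.) $\mathcal{H}$-measurable random variable dominating every element of $\Gamma$ a.s., and $\operatorname{ess\,inf}_{\mathcal{H}}\Gamma=-\operatorname{ess\,sup}_{\mathcal{H}}(-\Gamma)$ (with single-variable versions $\operatorname{ess\,sup}_{\mathcal{H}}(X)=\operatorname{ess\,sup}_{\mathcal{H}}\{X\}$). A conditional indicator w.r.t. $\mathcal{H}$ is a map $I:\mathbb{D}_I\to\mathbb{L}^0(\overline{\mathbb{R}},\mathcal{H})$, $0\in\mathbb{D}_I\subseteq\mathbb{L}^0(\overline{\mathbb{R}},\mathcal{F})$,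 with $I(X)\in[\operatorname{ess\,inf}_{\mathcal{H}}(X),\operatorname{ess\,sup}_{\mathcal{H}}(X)]$ a.s. and $\mathbb{D}_I+\mathbb{L}^0(\overline{\mathbb{R}},\mathcal{H})\subseteq\mathbb{D}_I$. Increasing: $X\le Y\Rightarrow I(X)\le I(Y)$. A set is $\mathcal{H}$-decomposable if $X1_H+Y1_{\Omega\setminus H}$ belongs to it whenever $X,Y$ do and $H\in\mathcal{H}$. A map $J$ defined on a domain $\mathbb{D}_J$ is regular if $\mathbb{D}_J$ is $\mathcal{H}$-decomposable and for $X,Y\in\mathbb{D}_J$, $H\in\mathcal{H}$, $X1_H=Y1_H$ implies $J(X)1_H=J(Y)1_H$. *)

theory Defs
  imports "HOL-Probability.Probability"
begin

text \<open>Random variables are functions \<open>'a \<Rightarrow> ereal\<close>; elements of L0 are identified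
  up to almost sure equality, so all (in)equalities between random variables are
  understood almost surely w.r.t. the probability measure M. The sub-sigma-algebra
  H is represented by a measure N with the same space (subalgebra M N).\<close>

text \<open>Addition with the paper's convention infinity minus infinity = 0.\<close>
definition eadd :: "ereal \<Rightarrow> ereal \<Rightarrow> ereal" where
  "eadd a b = (if (a = \<infinity> \<and> b = -\<infinity>) \<or> (a = -\<infinity> \<and> b = \<infinity>) then 0 else a + b)"

definition is_cond_esssup :: "'a measure \<Rightarrow> 'a measure \<Rightarrow> ('a \<Rightarrow> ereal) set \<Rightarrow> ('a \<Rightarrow> ereal) \<Rightarrow> bool" where
  "is_cond_esssup M N \<Gamma> Z \<longleftrightarrow>
     Z \<in> borel_measurable N \<and>
     (\<forall>X\<in>\<Gamma>. AE \<omega> in M. X \<omega> \<le> Z \<omega>) \<and>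
     (\<forall>Z'. Z' \<in> borel_measurable N \<and> (\<forall>X\<in>\<Gamma>. AE \<omega> in M. X \<omega> \<le> Z' \<omega>)
            \<longrightarrow> (AE \<omega> in M. Z \<omega> \<le> Z' \<omega>))"

definition cond_esssup :: "'a measure \<Rightarrow> 'a measure \<Rightarrow> ('a \<Rightarrow> ereal) set \<Rightarrow> ('a \<Rightarrow> ereal)" where
  "cond_esssup M N \<Gamma> = (SOME Z. is_cond_esssup M N \<Gamma> Z)"

definition cond_essinf :: "'a measure \<Rightarrow> 'a measure \<Rightarrow> ('a \<Rightarrow> ereal) set \<Rightarrow> ('a \<Rightarrow> ereal)" where
  "cond_essinf M N \<Gamma> = (\<lambda>\<omega>. - cond_esssup M N ((\<lambda>X \<omega>. - X \<omega>) ` \<Gamma>) \<omega>)"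

text \<open>Conditional indicator w.r.t. H with domain D. Since the paper works on L0
  (a.s.-equivalence classes), D is closed under a.s. equality and I respects a.s. equality.\<close>
definition cond_indicator :: "'a measure \<Rightarrow> 'a measure \<Rightarrow> ('a \<Rightarrow> ereal) set \<Rightarrow> (('a \<Rightarrow> ereal) \<Rightarrow> ('a \<Rightarrow> ereal)) \<Rightarrow> bool" where
  "cond_indicator M N D I \<longleftrightarrow>
     (\<lambda>_. 0) \<in> D \<and> D \<subseteq> borel_measurable M \<and>
     (\<forall>X\<in>D. \<forall>Y\<in>borel_measurable M. (AE \<omega> in M. X \<omega> = Y \<omega>) \<longrightarrow> Y \<in> D) \<and>
     (\<forall>X\<in>D. \<forall>Y\<in>D. (AE \<omega> in M. X \<omega> = Y \<omega>) \<longrightarrow> (AE \<omega> in M. I X \<omega> = I Y \<omega>)) \<and>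
     (\<forall>X\<in>D. I X \<in> borel_measurable N) \<and>
     (\<forall>X\<in>D. AE \<omega> in M. cond_essinf M N {X} \<omega> \<le> I X \<omega> \<and> I X \<omega> \<le> cond_esssup M N {X} \<omega>) \<and>
     (\<forall>X\<in>D. \<forall>Z\<in>borel_measurable N. (\<lambda>\<omega>. eadd (X \<omega>) (Z \<omega>)) \<in> D)"

definition increasing_on :: "'a measure \<Rightarrow> ('a \<Rightarrow> ereal) set \<Rightarrow> (('a \<Rightarrow> ereal) \<Rightarrow> ('a \<Rightarrow> ereal)) \<Rightarrow> bool" where
  "increasing_on M D I \<longleftrightarrow>
     (\<forall>X\<in>D. \<forall>Y\<in>D. (AE \<omega> in M. X \<omega> \<le> Y \<omega>) \<longrightarrow> (AE \<omega> in M. I X \<omega> \<le> I Y \<omega>))"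

text \<open>X 1_H (with 0 * (+-infinity) = 0).\<close>
definition ind_mul :: "'a set \<Rightarrow> ('a \<Rightarrow> ereal) \<Rightarrow> ('a \<Rightarrow> ereal)" where
  "ind_mul H X = (\<lambda>\<omega>. if \<omega> \<in> H then X \<omega> else 0)"

definition decomposable :: "'a measure \<Rightarrow> ('a \<Rightarrow> ereal) set \<Rightarrow> bool" where
  "decomposable N D \<longleftrightarrow>
     (\<forall>X\<in>D. \<forall>Y\<in>D. \<forall>H\<in>sets N. (\<lambda>\<omega>. if \<omega> \<in> H then X \<omega> else Y \<omega>) \<in> D)"

definition regular :: "'a measure \<Rightarrow> 'a measure \<Rightarrow> ('a \<Rightarrow> ereal) set \<Rightarrow> (('a \<Rightarrow> ereal) \<Rightarrow> ('a \<Rightarrow> ereal)) \<Rightarrow> bool" where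
  "regular M N D J \<longleftrightarrow> decomposable N D \<and>
     (\<forall>X\<in>D. \<forall>Y\<in>D. \<forall>H\<in>sets N.
        (AE \<omega> in M. ind_mul H X \<omega> = ind_mul H Y \<omega>) \<longrightarrow>
        (AE \<omega> in M. ind_mul H (J X) \<omega> = ind_mul H (J Y) \<omega>))"

definition lower_ext :: "'a measure \<Rightarrow> 'a measure \<Rightarrow> ('a \<Rightarrow> ereal) set \<Rightarrow> (('a \<Rightarrow> ereal) \<Rightarrow> ('a \<Rightarrow> ereal)) \<Rightarrow> ('a \<Rightarrow> ereal) \<Rightarrow> ('a \<Rightarrow> ereal)" where
  "lower_ext M N D I X = cond_esssup M N {I Y | Y. Y \<in> D \<and> (AE \<omega> in M. Y \<omega> \<le> X \<omega>)}"

definition upper_ext :: "'a measure \<Rightarrow> 'a measure \<Rightarrow> ('a \<Rightarrow> ereal) set \<Rightarrow> (('a \<Rightarrow> ereal) \<Rightarrow> ('a \<Rightarrow> ereal)) \<Rightarrow> ('a \<Rightarrow> ereal) \<Rightarrow> ('a \<Rightarrow> ereal)" where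
  "upper_ext M N D I X = cond_essinf M N {I Y | Y. Y \<in> D \<and> (AE \<omega> in M. X \<omega> \<le> Y \<omega>)}"

end

theory Submission imports Defs begin

definition phi :: "ereal \<Rightarrow> real" where
  "phi x = (case x of ereal r \<Rightarrow> arctan r | PInfty \<Rightarrow> pi/2 | MInfty \<Rightarrow> - pi/2)"

lemma arctan_bd: "arctan r < pi/2" "- (pi/2) < arctan r" "arctan r * 2 < pi" "\<bar>arctan r\<bar> * 2 \<le> pi"
  using arctan_ubound[of r] arctan_lbound[of r] by auto

lemma phi_strict: "a < b \<Longrightarrow> phi a < phi b"
  apply (cases a; cases b)
  apply (simp_all add: phi_def arctan_less_iff)
  by (simp_all add: arctan_bd)

lemma phi_mono: "a \<le> b \<Longrightarrow> phi a \<le> phi b"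
  using phi_strict[of a b] by (cases "a = b") (auto simp: order.order_iff_strict)

lemma phi_bound: "\<bar>phi a\<bar> \<le> pi/2"
  apply (cases a) apply (auto simp: phi_def)
  by (simp add: arctan_bd)

lemma phi_meas[measurable]:
  assumes "f \<in> borel_measurable M" shows "(\<lambda>x. phi (f x)) \<in> borel_measurable M"
  by (rule borel_measurable_ereal_cases[OF assms]) (simp add: phi_def, measurable, rule assms)

lemma esssup_exists:
  assumes ps: "prob_space M" and sub: "subalgebra M N" and G: "\<Gamma> \<subseteq> borel_measurable N"
  shows "\<exists>Z. is_cond_esssup M N \<Gamma> Z"
proof -
  interpret prob_space M by fact
  have NM: "f \<in> borel_measurable M" if "f \<in> borel_measurable N" for f :: "'a \<Rightarrow> ereal"
    using measurable_from_subalg[OF sub] that by blast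
  define S where "S C = (\<lambda>\<omega>. SUP f\<in>C. f \<omega>)" for C :: "('a \<Rightarrow> ereal) set"
  define v where "v C = (\<integral>\<omega>. phi (S C \<omega>) \<partial>M)" for C
  define A where "A = {C. countable C \<and> C \<subseteq> \<Gamma>}"
  have SN: "S C \<in> borel_measurable N" if "C \<in> A" for C
    unfolding S_def using G that A_def by (intro borel_measurable_SUP) auto
  have int: "integrable M (\<lambda>\<omega>. phi (S C \<omega>))" if "C \<in> A" for C
    by (rule integrable_const_bound[where B="pi/2"]) (use phi_bound in \<open>auto intro!: phi_meas NM SN that\<close>)
  have vb: "v C \<le> pi/2" if "C \<in> A" for C
  proof -
    have "v C \<le> (\<integral>\<omega>. pi/2 \<partial>M)"
      unfolding v_def using int[OF that] phi_bound
      by (intro integral_mono) (auto, smt (verit) phi_bound)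
    then show ?thesis by (simp add: prob_space)
  qed
  have Smono: "S C \<omega> \<le> S C' \<omega>" if "C \<subseteq> C'" for C C' \<omega>
    unfolding S_def using that by (intro SUP_subset_mono) auto
  have mono_v: "v C \<le> v C'" if "C \<in> A" "C' \<in> A" "C \<subseteq> C'" for C C'
    unfolding v_def using int that Smono phi_mono by (intro integral_mono) auto
  define s where "s = Sup (v ` A)"
  have bdd: "bdd_above (v ` A)" using vb by (intro bdd_aboveI[where M="pi/2"]) auto
  have ne: "{} \<in> A" unfolding A_def by auto
  have "\<exists>C\<in>A. s - 1/(Suc n) < v C" for n :: nat
  proof -
    have "s - 1/(Suc n) < s" by simp
    then show ?thesis unfolding s_def using ne bdd by (subst (asm) less_cSup_iff) auto
  qed
  then obtain Cn where Cn: "\<And>n. Cn n \<in> A" "\<And>n. s - 1/(Suc n) < v (Cn n)" by metis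
  define C where "C = \<Union>(range Cn)"
  have CA: "C \<in> A" using Cn(1) unfolding C_def A_def by auto
  have vC: "v C = s"
  proof (rule antisym)
    show "v C \<le> s" unfolding s_def using bdd CA by (intro cSup_upper) auto
    show "s \<le> v C"
    proof (rule ccontr)
      assume "\<not> s \<le> v C"
      then have "0 < s - v C" by simp
      from reals_Archimedean[OF this] obtain n where n: "inverse (real (Suc n)) < s - v C" by blast
      have "v (Cn n) \<le> v C" using Cn(1) CA by (intro mono_v) (auto simp: C_def)
      with Cn(2)[of n] have "s - v C < 1 / real (Suc n)" by linarith
      with n show False by (simp add: inverse_eq_divide)
    qed
  qed
  have "is_cond_esssup M N \<Gamma> (S C)"
    unfolding is_cond_esssup_def
  proof (intro conjI ballI allI impI)
    show "S C \<in> borel_measurable N" using SN CA .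
  next
    fix X assume X: "X \<in> \<Gamma>"
    define C' where "C' = insert X C"
    have C'A: "C' \<in> A" using CA X unfolding C'_def A_def by auto
    have "v C' \<le> s" unfolding s_def using bdd C'A by (intro cSup_upper) auto
    moreover have "v C \<le> v C'" using CA C'A by (intro mono_v) (auto simp: C'_def)
    ultimately have eq: "v C' - v C = 0" using vC by simp
    have "(\<integral>\<omega>. phi (S C' \<omega>) - phi (S C \<omega>) \<partial>M) = 0"
      using eq int[OF CA] int[OF C'A] unfolding v_def by simp
    then have "AE \<omega> in M. phi (S C' \<omega>) - phi (S C \<omega>) = 0"
      using int[OF CA] int[OF C'A] Smono[of C C'] phi_mono
      by (subst (asm) integral_nonneg_eq_0_iff_AE) (auto simp: C'_def)
    then show "AE \<omega> in M. X \<omega> \<le> S C \<omega>"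
    proof (rule AE_mp, intro AE_I2 impI)
      fix \<omega> assume h: "phi (S C' \<omega>) - phi (S C \<omega>) = 0"
      show "X \<omega> \<le> S C \<omega>"
      proof (rule ccontr)
        assume "\<not> X \<omega> \<le> S C \<omega>"
        then have "S C \<omega> < X \<omega>" by simp
        also have "X \<omega> \<le> S C' \<omega>" unfolding S_def C'_def by (intro SUP_upper) auto
        finally have "phi (S C \<omega>) < phi (S C' \<omega>)" by (rule phi_strict)
        with h show False by simp
      qed
    qed
  next
    fix Z' assume Z': "Z' \<in> borel_measurable N \<and> (\<forall>X\<in>\<Gamma>. AE \<omega> in M. X \<omega> \<le> Z' \<omega>)"
    have "countable C" using CA A_def by auto
    then have "AE \<omega> in M. \<forall>f\<in>C. f \<omega> \<le> Z' \<omega>"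
      using Z' CA A_def by (subst AE_ball_countable) auto
    then show "AE \<omega> in M. S C \<omega> \<le> Z' \<omega>"
      by eventually_elim (auto simp: S_def intro: SUP_least)
  qed
  then show ?thesis by blast
qed

lemma esssup_local:
  assumes sub: "subalgebra M N" and Z1: "is_cond_esssup M N \<Gamma>1 Z1" and Z2: "is_cond_esssup M N \<Gamma>2 Z2"
    and H: "H \<in> sets N"
    and dom: "\<forall>g\<in>\<Gamma>1. \<exists>g'\<in>\<Gamma>2. AE \<omega> in M. \<omega> \<in> H \<longrightarrow> g \<omega> \<le> g' \<omega>"
  shows "AE \<omega> in M. \<omega> \<in> H \<longrightarrow> Z1 \<omega> \<le> Z2 \<omega>"
proof -
  define Z where "Z = (\<lambda>\<omega>. if \<omega> \<in> H then Z2 \<omega> else Z1 \<omega>)"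
  have "Z \<in> borel_measurable N" using Z1 Z2 H unfolding Z_def is_cond_esssup_def
    by (intro measurable_If_set) auto
  moreover have "\<forall>g\<in>\<Gamma>1. AE \<omega> in M. g \<omega> \<le> Z \<omega>"
  proof
    fix g assume g: "g \<in> \<Gamma>1"
    obtain g' where g': "g' \<in> \<Gamma>2" and a: "AE \<omega> in M. \<omega> \<in> H \<longrightarrow> g \<omega> \<le> g' \<omega>" using dom g by blast
    have b: "AE \<omega> in M. g' \<omega> \<le> Z2 \<omega>" using Z2 g' unfolding is_cond_esssup_def by blast
    have c: "AE \<omega> in M. g \<omega> \<le> Z1 \<omega>" using Z1 g unfolding is_cond_esssup_def by blast
    from a b c show "AE \<omega> in M. g \<omega> \<le> Z \<omega>"
      by eventually_elim (auto simp: Z_def intro: order_trans)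
  qed
  ultimately have "AE \<omega> in M. Z1 \<omega> \<le> Z \<omega>" using Z1 unfolding is_cond_esssup_def by blast
  then show ?thesis by eventually_elim (auto simp: Z_def)
qed

theorem mainTheorem8:
  fixes M N :: "'a measure"
    and D :: "('a \<Rightarrow> ereal) set"
    and I :: "('a \<Rightarrow> ereal) \<Rightarrow> ('a \<Rightarrow> ereal)"
  assumes "prob_space M"
    and "complete_measure M"
    and "subalgebra M N"
    and "null_sets M \<subseteq> sets N"
    and "cond_indicator M N D I"
    and "increasing_on M D I"
    and "regular M N D I"
  shows "regular M N (borel_measurable M) (lower_ext M N D I)
       \<and> regular M N (borel_measurable M) (upper_ext M N D I)"
proof -
  note sub = assms(3)
  from assms(5) have D0: "(\<lambda>_. 0) \<in> D" and IN: "\<forall>X\<in>D. I X \<in> borel_measurable N"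
    and add: "\<forall>X\<in>D. \<forall>Z\<in>borel_measurable N. (\<lambda>\<omega>. eadd (X \<omega>) (Z \<omega>)) \<in> D"
    unfolding cond_indicator_def by blast+
  have "(\<lambda>\<omega>. eadd ((\<lambda>_. 0) \<omega>) ((\<lambda>_. -\<infinity>) \<omega>)) \<in> D"
    by (rule add[rule_format, OF D0]) simp
  then have minf: "(\<lambda>_. -\<infinity>) \<in> D" by (simp add: eadd_def)
  have "(\<lambda>\<omega>. eadd ((\<lambda>_. 0) \<omega>) ((\<lambda>_. \<infinity>) \<omega>)) \<in> D"
    by (rule add[rule_format, OF D0]) simp
  then have pinf: "(\<lambda>_. \<infinity>) \<in> D" by (simp add: eadd_def)
  from assms(7) have decD: "decomposable N D"
    and regI: "\<forall>X\<in>D. \<forall>Y\<in>D. \<forall>H\<in>sets N.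
        (AE \<omega> in M. ind_mul H X \<omega> = ind_mul H Y \<omega>) \<longrightarrow>
        (AE \<omega> in M. ind_mul H (I X) \<omega> = ind_mul H (I Y) \<omega>)"
    unfolding regular_def by blast+
  have sNM: "sets N \<subseteq> sets M" using sub unfolding subalgebra_def by auto
  have decM: "decomposable N (borel_measurable M)"
    unfolding decomposable_def using sNM by (auto intro!: measurable_If_set)
  define GL where "GL X = {I Y | Y. Y \<in> D \<and> (AE \<omega> in M. Y \<omega> \<le> X \<omega>)}" for X
  define GU where "GU X = (\<lambda>X \<omega>. - X \<omega>) ` {I Y | Y. Y \<in> D \<and> (AE \<omega> in M. X \<omega> \<le> Y \<omega>)}" for X
  have exL: "is_cond_esssup M N (GL X) (lower_ext M N D I X)" for X
    unfolding lower_ext_def cond_esssup_def GL_def[symmetric]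
    by (rule someI_ex[of "is_cond_esssup M N (GL X)"], rule esssup_exists[OF assms(1) sub]) (use IN in \<open>auto simp: GL_def\<close>)
  have exU: "is_cond_esssup M N (GU X) (cond_esssup M N (GU X))" for X
    unfolding cond_esssup_def
    by (rule someI_ex[of "is_cond_esssup M N (GU X)"], rule esssup_exists[OF assms(1) sub]) (use IN in \<open>auto simp: GU_def\<close>)
  have upper: "upper_ext M N D I X = (\<lambda>\<omega>. - cond_esssup M N (GU X) \<omega>)" for X
    unfolding upper_ext_def cond_essinf_def GU_def ..
  have keyL: "AE \<omega> in M. \<omega> \<in> H \<longrightarrow> lower_ext M N D I X \<omega> \<le> lower_ext M N D I Y \<omega>"
    if H: "H \<in> sets N" and XY: "AE \<omega> in M. ind_mul H X \<omega> = ind_mul H Y \<omega>" for X Y H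
  proof (rule esssup_local[OF sub exL exL H], intro ballI)
    fix g assume "g \<in> GL X"
    then obtain Z where g: "g = I Z" and Z: "Z \<in> D" "AE \<omega> in M. Z \<omega> \<le> X \<omega>" unfolding GL_def by blast
    define Z' where "Z' = (\<lambda>\<omega>. if \<omega> \<in> H then Z \<omega> else -\<infinity>)"
    have Z'D: "Z' \<in> D" unfolding Z'_def using decD[unfolded decomposable_def, rule_format, OF Z(1) minf H] by simp
    have "AE \<omega> in M. Z' \<omega> \<le> Y \<omega>" using XY Z(2)
      by eventually_elim (auto simp: Z'_def ind_mul_def split: if_splits)
    then have gY: "I Z' \<in> GL Y" using Z'D unfolding GL_def by blast
    have "AE \<omega> in M. ind_mul H (I Z) \<omega> = ind_mul H (I Z') \<omega>"
      by (rule regI[rule_format, OF Z(1) Z'D H], rule AE_I2) (simp add: ind_mul_def Z'_def)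
    then have "AE \<omega> in M. \<omega> \<in> H \<longrightarrow> I Z \<omega> = I Z' \<omega>"
      by eventually_elim (simp add: ind_mul_def split: if_split_asm)
    then have "AE \<omega> in M. \<omega> \<in> H \<longrightarrow> g \<omega> \<le> I Z' \<omega>"
      by eventually_elim (simp add: g)
    with gY show "\<exists>g'\<in>GL Y. AE \<omega> in M. \<omega> \<in> H \<longrightarrow> g \<omega> \<le> g' \<omega>" by blast
  qed
  have keyU: "AE \<omega> in M. \<omega> \<in> H \<longrightarrow> cond_esssup M N (GU X) \<omega> \<le> cond_esssup M N (GU Y) \<omega>"
    if H: "H \<in> sets N" and XY: "AE \<omega> in M. ind_mul H X \<omega> = ind_mul H Y \<omega>" for X Y H
  proof (rule esssup_local[OF sub exU exU H], intro ballI)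
    fix g assume "g \<in> GU X"
    then obtain Z where g: "g = (\<lambda>\<omega>. - I Z \<omega>)" and Z: "Z \<in> D" "AE \<omega> in M. X \<omega> \<le> Z \<omega>" unfolding GU_def by blast
    define Z' where "Z' = (\<lambda>\<omega>. if \<omega> \<in> H then Z \<omega> else \<infinity>)"
    have Z'D: "Z' \<in> D" unfolding Z'_def using decD[unfolded decomposable_def, rule_format, OF Z(1) pinf H] by simp
    have "AE \<omega> in M. Y \<omega> \<le> Z' \<omega>" using XY Z(2)
      by eventually_elim (auto simp: Z'_def ind_mul_def split: if_splits)
    then have gY: "(\<lambda>\<omega>. - I Z' \<omega>) \<in> GU Y" using Z'D unfolding GU_def by blast
    have "AE \<omega> in M. ind_mul H (I Z) \<omega> = ind_mul H (I Z') \<omega>"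
      by (rule regI[rule_format, OF Z(1) Z'D H], rule AE_I2) (simp add: ind_mul_def Z'_def)
    then have "AE \<omega> in M. \<omega> \<in> H \<longrightarrow> I Z \<omega> = I Z' \<omega>"
      by eventually_elim (simp add: ind_mul_def split: if_split_asm)
    then have "AE \<omega> in M. \<omega> \<in> H \<longrightarrow> g \<omega> \<le> - I Z' \<omega>"
      by eventually_elim (simp add: g)
    with gY show "\<exists>g'\<in>GU Y. AE \<omega> in M. \<omega> \<in> H \<longrightarrow> g \<omega> \<le> g' \<omega>" by (intro bexI)
  qed
  have symm: "AE \<omega> in M. ind_mul H Y \<omega> = ind_mul H X \<omega>"
    if "AE \<omega> in M. ind_mul H X \<omega> = ind_mul H Y \<omega>" for H X Y
    using that by eventually_elim simp
  have "regular M N (borel_measurable M) (lower_ext M N D I)"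
    unfolding regular_def
  proof (intro conjI decM ballI impI)
    fix X Y H assume H: "H \<in> sets N" and XY: "AE \<omega> in M. ind_mul H X \<omega> = ind_mul H Y \<omega>"
    from keyL[OF H XY] keyL[OF H symm[OF XY]]
    show "AE \<omega> in M. ind_mul H (lower_ext M N D I X) \<omega> = ind_mul H (lower_ext M N D I Y) \<omega>"
      by eventually_elim (auto simp: ind_mul_def)
  qed
  moreover have "regular M N (borel_measurable M) (upper_ext M N D I)"
    unfolding regular_def
  proof (intro conjI decM ballI impI)
    fix X Y H assume H: "H \<in> sets N" and XY: "AE \<omega> in M. ind_mul H X \<omega> = ind_mul H Y \<omega>"
    from keyU[OF H XY] keyU[OF H symm[OF XY]]
    show "AE \<omega> in M. ind_mul H (upper_ext M N D I X) \<omega> = ind_mul H (upper_ext M N D I Y) \<omega>"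
      by eventually_elim (auto simp: ind_mul_def upper)
  qed
  ultimately show ?thesis ..
qed

end
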